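(* Let $f:\mathbb{D}\times\mathbb{D}\to[0,1)$ be given by $f(z_1,z_2)=|\varphi_{z_1}(z_2)|=\left|\frac{z_1-z_2}{1-\overline{z_1}z_2}\right|$, and let $D=\{(z,z):z\in\mathbb{D}\}$. Then: (1) $f|_{\mathbb{D}\times\mathbb{D}-D}:\mathbb{D}\times\mathbb{D}-D\to(0,1)$ is a submersion (regarding $\mathbb{D}\times\mathbb{D}$ as a real $4$-manifold); (2) $f$ defines a three-dimensional foliation $\mathscr{F}$ of $\mathbb{D}\times\mathbb{D}-D$ whose leaves are $\mathscr{F}_a=f^{-1}\{a\}$, $a\in(0,1)$; (3) each leaf $\mathscr{F}_a$ is a real $3$-manifold; (4) for each leaf $\mathscr{F}_a$, the action of $\mathbb{Z}_2=\{\pm1\}$ on $\mathbb{D}\times\mathbb{D}$ given by $(+1)\cdot(z_1,z_2)=(z_1,z_2)$, $(-1)\cdot(z_1,z_2)=(z_2,z_1)$ induces a free, properly discontinuous action on $\mathscr{F}_a$.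
   Context: $\mathbb{D}$ is the open unit disc in $\mathbb{C}$. For $\alpha\in\mathbb{D}$, $\varphi_\alpha(z)=\frac{\alpha-z}{1-\overline{\alpha}z}$. *)

theory Defs
  imports "HOL-Analysis.Analysis"
begin

definition unit_disc :: "complex set" where
  "unit_disc = ball 0 1"

definition phi :: "complex \<Rightarrow> complex \<Rightarrow> complex" where
  "phi \<alpha> z = (\<alpha> - z) / (1 - cnj \<alpha> * z)"

fun dirderivs :: "'a::real_normed_vector list \<Rightarrow> ('a \<Rightarrow> 'b::real_normed_vector) \<Rightarrow> 'a \<Rightarrow> 'b" where
  "dirderivs [] f = f"
| "dirderivs (v # vs) f = (\<lambda>x. frechet_derivative (dirderivs vs f) (at x) v)"

definition smooth_on :: "'a::euclidean_space set \<Rightarrow> ('a \<Rightarrow> 'b::real_normed_vector) \<Rightarrow> bool" where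
  "smooth_on U f \<longleftrightarrow> open U \<and> (\<forall>vs. \<forall>x\<in>U. dirderivs vs f differentiable (at x))"

definition submersion_on :: "'a::euclidean_space set \<Rightarrow> ('a \<Rightarrow> 'b::euclidean_space) \<Rightarrow> bool" where
  "submersion_on U f \<longleftrightarrow> smooth_on U f \<and> (\<forall>x\<in>U. surj (frechet_derivative f (at x)))"

definition diffeo_on :: "'a::euclidean_space set \<Rightarrow> ('a \<Rightarrow> 'b::euclidean_space) \<Rightarrow> bool" where
  "diffeo_on W h \<longleftrightarrow> open W \<and> inj_on h W \<and> open (h ` W) \<and> smooth_on W h
     \<and> smooth_on (h ` W) (inv_into W h)"

text \<open>Embedded submanifold of the ambient space modelled on 'b (slice charts into 'b \<times> 'c);
  its dimension is DIM('b).\<close>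
definition embedded_submanifold ::
  "'a::euclidean_space set \<Rightarrow> 'b::euclidean_space itself \<Rightarrow> 'c::euclidean_space itself \<Rightarrow> bool" where
  "embedded_submanifold M tb tc \<longleftrightarrow>
     (\<forall>p\<in>M. \<exists>W (h::'a \<Rightarrow> 'b \<times> 'c). p \<in> W \<and> diffeo_on W h \<and>
        h ` (M \<inter> W) = {y \<in> h ` W. snd y = 0})"

text \<open>A (smooth, regular) foliation of the open set U with leaf family L whose leaves
  have dimension DIM('b) and codimension DIM('c): L is a partition of U into nonempty
  connected sets, and around each point there is a foliation chart onto a convex open set
  of 'b \<times> 'c, mapping each connected component of (leaf \<inter> chart domain) onto a slice.\<close>
definition foliation ::
  "'a::euclidean_space set \<Rightarrow> 'a set set \<Rightarrow> 'b::euclidean_space itself \<Rightarrow> 'c::euclidean_space itself \<Rightarrow> bool" where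
  "foliation U L tb tc \<longleftrightarrow> open U \<and> \<Union>L = U \<and> (\<forall>A\<in>L. A \<noteq> {} \<and> connected A)
     \<and> (\<forall>A\<in>L. \<forall>B\<in>L. A \<noteq> B \<longrightarrow> A \<inter> B = {})
     \<and> (\<forall>p\<in>U. \<exists>W (h::'a \<Rightarrow> 'b \<times> 'c). p \<in> W \<and> W \<subseteq> U \<and> diffeo_on W h \<and> convex (h ` W)
          \<and> (\<forall>A\<in>L. \<forall>C\<in>components (A \<inter> W). \<exists>c. h ` C = {y \<in> h ` W. snd y = c}))"

definition swap_act :: "int \<Rightarrow> complex \<times> complex \<Rightarrow> complex \<times> complex" where
  "swap_act g p = (if g = 1 then p else (snd p, fst p))"

definition invariant_under :: "'g set \<Rightarrow> ('g \<Rightarrow> 'x \<Rightarrow> 'x) \<Rightarrow> 'x set \<Rightarrow> bool" where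
  "invariant_under G act X \<longleftrightarrow> (\<forall>g\<in>G. act g ` X \<subseteq> X)"

definition free_action :: "'g set \<Rightarrow> 'g \<Rightarrow> ('g \<Rightarrow> 'x \<Rightarrow> 'x) \<Rightarrow> 'x set \<Rightarrow> bool" where
  "free_action G e act X \<longleftrightarrow> (\<forall>g\<in>G. \<forall>x\<in>X. act g x = x \<longrightarrow> g = e)"

definition properly_discontinuous_action ::
  "'g set \<Rightarrow> 'g \<Rightarrow> ('g \<Rightarrow> 'x::topological_space \<Rightarrow> 'x) \<Rightarrow> 'x set \<Rightarrow> bool" where
  "properly_discontinuous_action G e act X \<longleftrightarrow>
     (\<forall>x\<in>X. \<exists>V. openin (top_of_set X) V \<and> x \<in> V \<and>
        (\<forall>g\<in>G. g \<noteq> e \<longrightarrow> act g ` V \<inter> V = {}))"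

end

theory Submission
  imports Defs
begin


inductive_set Tf :: "'a::real_normed_vector set \<Rightarrow> ('a \<Rightarrow> real) set" for U where
  T_const: "(\<lambda>x. c) \<in> Tf U"
| T_lin: "bounded_linear L \<Longrightarrow> L \<in> Tf U"
| T_add: "g \<in> Tf U \<Longrightarrow> h \<in> Tf U \<Longrightarrow> (\<lambda>x. g x + h x) \<in> Tf U"
| T_mult: "g \<in> Tf U \<Longrightarrow> h \<in> Tf U \<Longrightarrow> (\<lambda>x. g x * h x) \<in> Tf U"
| T_inv: "g \<in> Tf U \<Longrightarrow> (\<forall>x\<in>U. g x \<noteq> 0) \<Longrightarrow> (\<lambda>x. inverse (g x)) \<in> Tf U"
| T_powr: "g \<in> Tf U \<Longrightarrow> (\<forall>x\<in>U. g x > 0) \<Longrightarrow> (\<lambda>x. g x powr r) \<in> Tf U"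
| T_cong: "g \<in> Tf U \<Longrightarrow> (\<forall>x\<in>U. h x = g x) \<Longrightarrow> h \<in> Tf U"

lemma Tf_deriv:
  assumes "open U" "g \<in> Tf U"
  shows "\<exists>D. (\<forall>x\<in>U. (g has_derivative D x) (at x)) \<and> (\<forall>v. (\<lambda>x. D x v) \<in> Tf U)"
  using assms(2)
proof induction
  case (T_const c)
  show ?case by (rule exI[of _ "\<lambda>x v. 0"]) (auto intro: Tf.T_const)
next
  case (T_lin L)
  show ?case by (rule exI[of _ "\<lambda>x. L"]) (auto intro: Tf.T_const bounded_linear.has_derivative[OF T_lin(1)])
next
  case (T_add g h)
  then obtain Dg Dh where g: "\<forall>x\<in>U. (g has_derivative Dg x) (at x)" "\<forall>v. (\<lambda>x. Dg x v) \<in> Tf U"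
     and h: "\<forall>x\<in>U. (h has_derivative Dh x) (at x)" "\<forall>v. (\<lambda>x. Dh x v) \<in> Tf U" by blast
  show ?case by (rule exI[of _ "\<lambda>x v. Dg x v + Dh x v"]) (use g h in \<open>auto intro!: Tf.T_add has_derivative_add\<close>)
next
  case (T_mult g h)
  then obtain Dg Dh where g: "\<forall>x\<in>U. (g has_derivative Dg x) (at x)" "\<forall>v. (\<lambda>x. Dg x v) \<in> Tf U"
     and h: "\<forall>x\<in>U. (h has_derivative Dh x) (at x)" "\<forall>v. (\<lambda>x. Dh x v) \<in> Tf U" by blast
  show ?case by (rule exI[of _ "\<lambda>x v. g x * Dh x v + Dg x v * h x"])
     (use g h T_mult in \<open>auto intro!: Tf.T_add Tf.T_mult has_derivative_mult\<close>)
next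
  case (T_inv g)
  then obtain Dg where g: "\<forall>x\<in>U. (g has_derivative Dg x) (at x)" "\<forall>v. (\<lambda>x. Dg x v) \<in> Tf U" by blast
  have d1: "\<forall>x\<in>U. ((\<lambda>x. inverse (g x)) has_derivative (\<lambda>v. - (inverse (g x) * Dg x v * inverse (g x)))) (at x)"
    using g(1) T_inv.hyps(2) by (auto intro!: Deriv.has_derivative_inverse)
  moreover have d2: "(\<lambda>x. - (inverse (g x) * Dg x v * inverse (g x))) \<in> Tf U" for v
  proof -
    have "(\<lambda>x. (-1) * (inverse (g x) * Dg x v * inverse (g x))) \<in> Tf U"
      using g T_inv by (intro Tf.T_mult Tf.T_const Tf.T_inv) auto
    then show ?thesis by (rule Tf.T_cong) auto
  qed
  show ?case by (rule exI[of _ "\<lambda>x v. - (inverse (g x) * Dg x v * inverse (g x))"]) (use d1 d2 in auto)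
next
  case (T_powr g r)
  then obtain Dg where g: "\<forall>x\<in>U. (g has_derivative Dg x) (at x)" "\<forall>v. (\<lambda>x. Dg x v) \<in> Tf U" by blast
  have d1: "\<forall>x\<in>U. ((\<lambda>x. g x powr r) has_derivative (\<lambda>v. g x powr r * (0 * ln (g x) + Dg x v * r / g x))) (at x)"
  proof
    fix x assume x: "x \<in> U"
    show "((\<lambda>x. g x powr r) has_derivative (\<lambda>v. g x powr r * (0 * ln (g x) + Dg x v * r / g x))) (at x)"
      using has_derivative_powr[OF g(1)[rule_format, OF x] has_derivative_const[of r] _ UNIV_I] T_powr.hyps(2) x
      by auto
  qed
  moreover have d2: "(\<lambda>x. g x powr r * (0 * ln (g x) + Dg x v * r / g x)) \<in> Tf U" for v
  proof -
    have "(\<lambda>x. g x powr r * (Dg x v * r * inverse (g x))) \<in> Tf U"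
      using T_powr g by (intro Tf.T_mult Tf.T_const Tf.T_inv Tf.T_powr) auto
    then show ?thesis by (rule Tf.T_cong) (auto simp: divide_inverse)
  qed
  show ?case by (rule exI[of _ "\<lambda>x v. g x powr r * (0 * ln (g x) + Dg x v * r / g x)"]) (use d1 d2 in auto)
next
  case (T_cong g h)
  then obtain Dg where g: "\<forall>x\<in>U. (g has_derivative Dg x) (at x)" "\<forall>v. (\<lambda>x. Dg x v) \<in> Tf U" by blast
  have "\<forall>x\<in>U. (h has_derivative Dg x) (at x)"
  proof
    fix x assume "x \<in> U"
    show "(h has_derivative Dg x) (at x)"
      by (rule has_derivative_transform_within_open[OF g(1)[rule_format, OF \<open>x\<in>U\<close>] assms(1) \<open>x\<in>U\<close>])
         (use T_cong.hyps(2) in auto)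
  qed
  with g show ?case by blast
qed

definition Tv :: "'a::real_normed_vector set \<Rightarrow> ('a \<Rightarrow> 'b::euclidean_space) set" where
  "Tv U = {g. \<forall>b\<in>Basis. (\<lambda>x. g x \<bullet> b) \<in> Tf U}"

lemma Tv_cong: "g \<in> Tv U \<Longrightarrow> (\<forall>x\<in>U. h x = g x) \<Longrightarrow> h \<in> Tv U"
  unfolding Tv_def by (auto intro: Tf.T_cong)

lemma Tv_deriv:
  assumes "open U" "g \<in> Tv U"
  shows "\<exists>D. (\<forall>x\<in>U. (g has_derivative D x) (at x)) \<and> (\<forall>v. (\<lambda>x. D x v) \<in> Tv U)"
proof -
  have "\<forall>b\<in>Basis. \<exists>D. (\<forall>x\<in>U. ((\<lambda>x. g x \<bullet> b) has_derivative D x) (at x)) \<and> (\<forall>v. (\<lambda>x. D x v) \<in> Tf U)"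
    using assms Tf_deriv unfolding Tv_def by blast
  then obtain D where D: "\<And>b. b \<in> Basis \<Longrightarrow> (\<forall>x\<in>U. ((\<lambda>x. g x \<bullet> b) has_derivative D b x) (at x)) \<and> (\<forall>v. (\<lambda>x. D b x v) \<in> Tf U)"
    by metis
  define E where "E x v = (\<Sum>b\<in>Basis. D b x v *\<^sub>R b)" for x v
  have "(g has_derivative E x) (at x)" if "x \<in> U" for x
  proof -
    have "((\<lambda>y. \<Sum>b\<in>Basis. (g y \<bullet> b) *\<^sub>R b) has_derivative E x) (at x)"
      unfolding E_def using D that by (intro has_derivative_sum has_derivative_scaleR_left) auto
    then show ?thesis by (simp add: euclidean_representation)
  qed
  moreover have "(\<lambda>x. E x v) \<in> Tv U" for v
  proof -
    have "(\<lambda>x. E x v \<bullet> b) = (\<lambda>x. D b x v)" if "b \<in> Basis" for b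
      unfolding E_def using that by (simp add: inner_sum_left inner_Basis if_distrib cong: if_cong)
    then show ?thesis using D unfolding Tv_def by auto
  qed
  ultimately show ?thesis by blast
qed

lemma Tv_smooth:
  assumes "open U" "g \<in> Tv U"
  shows "smooth_on U g"
proof -
  have "dirderivs vs g \<in> Tv U" for vs
  proof (induction vs)
    case Nil then show ?case using assms by simp
  next
    case (Cons v vs)
    obtain D where D: "\<forall>x\<in>U. (dirderivs vs g has_derivative D x) (at x)" "\<forall>v. (\<lambda>x. D x v) \<in> Tv U"
      using Tv_deriv[OF assms(1) Cons] by blast
    show ?case
      by (rule Tv_cong[OF D(2)[rule_format, of v]]) (use D(1) frechet_derivative_at in force)
  qed
  then show ?thesis unfolding smooth_on_def using assms Tv_deriv differentiable_def by blast
qed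

lemma Tv_continuous: "open U \<Longrightarrow> g \<in> Tv U \<Longrightarrow> continuous_on U g"
  using Tv_deriv[of U g] by (metis continuous_at_imp_continuous_on has_derivative_continuous)




lemmas Tops = Tf.T_const Tf.T_add Tf.T_mult Tf.T_inv Tf.T_powr


lemma T_diff: "g \<in> Tf U \<Longrightarrow> h \<in> Tf U \<Longrightarrow> (\<lambda>x. g x - h x) \<in> Tf U"
proof -
  assume "g \<in> Tf U" "h \<in> Tf U"
  then have "(\<lambda>x. g x + (-1) * h x) \<in> Tf U" by (intro Tops)
  then show ?thesis by (rule Tf.T_cong) auto
qed

lemma T_sqrt: "g \<in> Tf U \<Longrightarrow> (\<forall>x\<in>U. g x > 0) \<Longrightarrow> (\<lambda>x. sqrt (g x)) \<in> Tf U"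
proof -
  assume "g \<in> Tf U" "\<forall>x\<in>U. g x > 0"
  then have "(\<lambda>x. g x powr (1/2)) \<in> Tf U" by (intro Tops)
  then show ?thesis by (rule Tf.T_cong) (use \<open>\<forall>x\<in>U. g x > 0\<close> in \<open>auto simp: powr_half_sqrt\<close>)
qed

definition TC :: "'a::real_normed_vector set \<Rightarrow> ('a \<Rightarrow> complex) set" where
  "TC U = {g. (\<lambda>x. Re (g x)) \<in> Tf U \<and> (\<lambda>x. Im (g x)) \<in> Tf U}"

lemma TC_cong: "g \<in> TC U \<Longrightarrow> (\<forall>x\<in>U. h x = g x) \<Longrightarrow> h \<in> TC U"
  unfolding TC_def by (auto intro: Tf.T_cong)

lemma TC_const: "(\<lambda>x. c) \<in> TC U"
  unfolding TC_def by (auto intro: Tops)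

lemma TC_Complex: "g \<in> Tf U \<Longrightarrow> h \<in> Tf U \<Longrightarrow> (\<lambda>x. Complex (g x) (h x)) \<in> TC U"
  unfolding TC_def by auto

lemma TC_add: "g \<in> TC U \<Longrightarrow> h \<in> TC U \<Longrightarrow> (\<lambda>x. g x + h x) \<in> TC U"
  unfolding TC_def by (auto intro: Tops)

lemma TC_diff: "g \<in> TC U \<Longrightarrow> h \<in> TC U \<Longrightarrow> (\<lambda>x. g x - h x) \<in> TC U"
  unfolding TC_def by (auto intro: T_diff)

lemma TC_mult: "g \<in> TC U \<Longrightarrow> h \<in> TC U \<Longrightarrow> (\<lambda>x. g x * h x) \<in> TC U"
  unfolding TC_def by (auto intro!: T_diff Tops)

lemma TC_cnj: "g \<in> TC U \<Longrightarrow> (\<lambda>x. cnj (g x)) \<in> TC U"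
proof -
  assume "g \<in> TC U"
  then have r: "(\<lambda>x. Re (g x)) \<in> Tf U" and i: "(\<lambda>x. Im (g x)) \<in> Tf U" by (auto simp: TC_def)
  have "(\<lambda>x. Complex (Re (g x)) (0 - Im (g x))) \<in> TC U"
    by (intro TC_Complex T_diff Tf.T_const r i)
  then show ?thesis by (rule TC_cong) (auto simp: complex_eq_iff)
qed

lemma TC_inverse: "g \<in> TC U \<Longrightarrow> (\<forall>x\<in>U. g x \<noteq> 0) \<Longrightarrow> (\<lambda>x. inverse (g x)) \<in> TC U"
proof -
  assume g: "g \<in> TC U" and nz: "\<forall>x\<in>U. g x \<noteq> 0"
  have n: "(\<lambda>x. Re (g x) * Re (g x) + Im (g x) * Im (g x)) \<in> Tf U"
    using g unfolding TC_def by (auto intro!: Tops)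
  have gg: "(\<lambda>x. Re (g x)) \<in> Tf U" "(\<lambda>x. Im (g x)) \<in> Tf U" using g by (auto simp: TC_def)
  have pos: "\<forall>x\<in>U. Re (g x) * Re (g x) + Im (g x) * Im (g x) \<noteq> 0"
    using nz by (auto simp: sum_squares_eq_zero_iff complex_eq_iff)
  have "(\<lambda>x. Complex (Re (g x) * inverse (Re (g x) * Re (g x) + Im (g x) * Im (g x)))
             ((0 - Im (g x)) * inverse (Re (g x) * Re (g x) + Im (g x) * Im (g x)))) \<in> TC U"
    using gg n pos by (intro TC_Complex T_diff Tops) auto
  then show ?thesis
    by (rule TC_cong) (auto simp: complex_eq_iff inverse_complex.sel power2_eq_square divide_inverse)
qed

lemma TC_divide: "g \<in> TC U \<Longrightarrow> h \<in> TC U \<Longrightarrow> (\<forall>x\<in>U. h x \<noteq> 0) \<Longrightarrow> (\<lambda>x. g x / h x) \<in> TC U"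
  by (simp add: divide_inverse TC_mult TC_inverse)

lemma T_cmod: "g \<in> TC U \<Longrightarrow> (\<forall>x\<in>U. g x \<noteq> 0) \<Longrightarrow> (\<lambda>x. cmod (g x)) \<in> Tf U"
proof -
  assume g: "g \<in> TC U" and nz: "\<forall>x\<in>U. g x \<noteq> 0"
  have n: "(\<lambda>x. Re (g x) * Re (g x) + Im (g x) * Im (g x)) \<in> Tf U"
    using g unfolding TC_def by (auto intro!: Tops)
  have pos: "\<forall>x\<in>U. Re (g x) * Re (g x) + Im (g x) * Im (g x) > 0"
    using nz by (auto simp: sum_squares_gt_zero_iff complex_eq_iff)
  have "(\<lambda>x. sqrt (Re (g x) * Re (g x) + Im (g x) * Im (g x))) \<in> Tf U"
    using n pos by (rule T_sqrt)
  then show ?thesis by (rule Tf.T_cong) (auto simp: cmod_def power2_eq_square)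
qed

lemma TC_Tv: "g \<in> TC U \<Longrightarrow> g \<in> Tv U"
  unfolding TC_def Tv_def by (auto simp: Basis_complex_def)

lemma Tf_Tv: "g \<in> Tf U \<Longrightarrow> g \<in> Tv U"
  unfolding Tv_def by auto

lemma Tv_prod_complex:
  fixes g :: "'a::real_normed_vector \<Rightarrow> complex \<times> complex"
  shows "(\<lambda>x. fst (g x)) \<in> TC U \<Longrightarrow> (\<lambda>x. snd (g x)) \<in> TC U \<Longrightarrow> g \<in> Tv U"
  unfolding TC_def Tv_def by (simp add: Basis_prod_def Basis_complex_def inner_prod_def ball_Un)

lemma Tv_vec3:
  fixes g :: "'a::real_normed_vector \<Rightarrow> (real^3) \<times> real"
  shows "(\<And>i. (\<lambda>x. fst (g x) $ i) \<in> Tf U) \<Longrightarrow> (\<lambda>x. snd (g x)) \<in> Tf U \<Longrightarrow> g \<in> Tv U"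
  unfolding Tv_def by (simp add: Basis_prod_def Basis_vec_def inner_prod_def inner_axis ball_Un)

lemma TC_fst: "(\<lambda>p::complex\<times>complex. fst p) \<in> TC U"
  unfolding TC_def
  by (auto intro!: Tf.T_lin bounded_linear_compose[OF bounded_linear_Re bounded_linear_fst]
     bounded_linear_compose[OF bounded_linear_Im bounded_linear_fst])

lemma TC_snd: "(\<lambda>p::complex\<times>complex. snd p) \<in> TC U"
  unfolding TC_def
  by (auto intro!: Tf.T_lin bounded_linear_compose[OF bounded_linear_Re bounded_linear_snd]
     bounded_linear_compose[OF bounded_linear_Im bounded_linear_snd])

lemma T_vec_nth: "(\<lambda>p::(real^3)\<times>real. fst p $ i) \<in> Tf U"
  by (auto intro!: Tf.T_lin bounded_linear_compose[OF bounded_linear_vec_nth bounded_linear_fst])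

lemma T_snd_real: "(\<lambda>p::(real^3)\<times>real. snd p) \<in> Tf U"
  by (auto intro!: Tf.T_lin bounded_linear_snd)




lemma disc_iff: "z \<in> unit_disc \<longleftrightarrow> cmod z < 1"
  by (simp add: unit_disc_def)

lemma phi_denom: "cmod a < 1 \<Longrightarrow> cmod z < 1 \<Longrightarrow> 1 - cnj a * z \<noteq> 0"
proof
  assume a: "cmod a < 1" and z: "cmod z < 1" and e: "1 - cnj a * z = 0"
  then have "cnj a * z = 1" by simp
  then have "cmod a * cmod z = 1" by (metis complex_mod_cnj norm_mult norm_one)
  moreover have "cmod a * cmod z < 1"
    using a z by (metis mult_strict_mono' norm_ge_zero mult_1_right)
  ultimately show False by simp
qed

lemma phi_key: "(cmod (1 - cnj a * z))^2 - (cmod (a - z))^2 = (1 - (cmod a)^2) * (1 - (cmod z)^2)"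
  unfolding cmod_power2 by (simp add: algebra_simps power2_eq_square)

lemma phi_in_disc:
  assumes "cmod a < 1" "cmod z < 1" shows "cmod (phi a z) < 1"
proof -
  have d: "1 - cnj a * z \<noteq> 0" using phi_denom assms .
  have "(1 - (cmod a)^2) * (1 - (cmod z)^2) > 0"
    using assms by (intro mult_pos_pos) (auto simp: abs_square_less_1)
  then have "(cmod (a - z))^2 < (cmod (1 - cnj a * z))^2" using phi_key[of a z] by linarith
  then have "cmod (a - z) < cmod (1 - cnj a * z)" by (simp add: power2_less_imp_less)
  then show ?thesis using d by (simp add: phi_def norm_divide divide_less_eq)
qed

lemma frac_aux:
  fixes a b X D :: complex
  assumes "D \<noteq> 0"
  shows "(a - X/D)/(1 - b*(X/D)) = (a*D - X)/(D - b*X)"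
proof -
  have 1: "a - X/D = (a*D - X)/D" using assms by (simp add: field_simps)
  have 2: "1 - b*(X/D) = (D - b*X)/D" using assms by (simp add: field_simps)
  show ?thesis unfolding 1 2 using assms by (cases "D - b*X = 0") (simp_all add: field_simps)
qed

lemma phi_invol:
  assumes "cmod a < 1" "cmod w < 1" shows "phi a (phi a w) = w"
proof -
  have d: "1 - cnj a * w \<noteq> 0" using phi_denom assms .
  have aa: "cnj a * a = complex_of_real ((cmod a)^2)" by (metis complex_norm_square mult.commute of_real_power)
  have n: "1 - complex_of_real ((cmod a)^2) \<noteq> 0"
  proof
    assume "1 - complex_of_real ((cmod a)^2) = 0"
    then have "(cmod a)^2 = 1" by (metis eq_iff_diff_eq_0 of_real_eq_1_iff)
    then show False using assms(1) abs_square_less_1[of "cmod a"] by simp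
  qed
  have "phi a (phi a w) = (a * (1 - cnj a * w) - (a - w)) / ((1 - cnj a * w) - cnj a * (a - w))"
    unfolding phi_def using d by (rule frac_aux)
  also have "\<dots> = (w * (1 - cnj a * a)) / (1 - cnj a * a)"
    by (simp add: algebra_simps)
  also have "\<dots> = w" using n aa by simp
  finally show ?thesis .
qed

lemma phi_eq_0_iff: "cmod a < 1 \<Longrightarrow> cmod z < 1 \<Longrightarrow> phi a z = 0 \<longleftrightarrow> a = z"
  using phi_denom[of a z] by (simp add: phi_def)

lemma cmod_phi_swap: "cmod (phi b a) = cmod (phi a b)"
proof -
  have "cmod (1 - cnj b * a) = cmod (1 - cnj a * b)"
    by (metis complex_cnj_cnj complex_cnj_diff complex_cnj_mult complex_cnj_one complex_mod_cnj mult.commute)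
  moreover have "cmod (b - a) = cmod (a - b)" by (simp add: norm_minus_commute)
  ultimately show ?thesis by (simp add: phi_def norm_divide)
qed




lemma TC_phi:
  assumes "g1 \<in> TC U" "g2 \<in> TC U" "\<forall>x\<in>U. cmod (g1 x) < 1 \<and> cmod (g2 x) < 1"
  shows "(\<lambda>x. phi (g1 x) (g2 x)) \<in> TC U"
proof -
  have "(\<lambda>x. (g1 x - g2 x) / (1 - cnj (g1 x) * g2 x)) \<in> TC U"
    using assms phi_denom by (intro TC_divide TC_diff TC_const TC_mult TC_cnj) auto
  then show ?thesis by (simp add: phi_def)
qed

lemma TC_Re: "g \<in> TC U \<Longrightarrow> (\<lambda>x. Re (g x)) \<in> Tf U" and TC_Im: "g \<in> TC U \<Longrightarrow> (\<lambda>x. Im (g x)) \<in> Tf U"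
  by (auto simp: TC_def)

definition wf :: "complex \<Rightarrow> complex \<times> complex \<Rightarrow> complex" where
  "wf u p = cnj u * phi (fst p) (snd p)"
definition hmap :: "complex \<Rightarrow> real \<Rightarrow> complex \<times> complex \<Rightarrow> (real^3) \<times> real" where
  "hmap u s p = (vector [Re (fst p), Im (fst p), Im (wf u p)], cmod (phi (fst p) (snd p)) - s)"
definition zof :: "(real^3) \<times> real \<Rightarrow> complex" where
  "zof y = Complex (fst y $ 1) (fst y $ 2)"
definition wof :: "real \<Rightarrow> (real^3) \<times> real \<Rightarrow> complex" where
  "wof s y = Complex (sqrt ((snd y + s)^2 - (fst y $ 3)^2)) (fst y $ 3)"
definition gmap :: "complex \<Rightarrow> real \<Rightarrow> (real^3) \<times> real \<Rightarrow> complex \<times> complex" where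
  "gmap u s y = (zof y, phi (zof y) (u * wof s y))"
definition D2 :: "(complex \<times> complex) set" where
  "D2 = {p. cmod (fst p) < 1 \<and> cmod (snd p) < 1}"
definition Wset :: "complex \<Rightarrow> real \<Rightarrow> real \<Rightarrow> real \<Rightarrow> (complex \<times> complex) set" where
  "Wset u e lo hi = {p \<in> D2. 0 < Re (wf u p) \<and> \<bar>Im (wf u p)\<bar> < e \<and> lo < cmod (wf u p) \<and> cmod (wf u p) < hi}"
definition Bset :: "real \<Rightarrow> real \<Rightarrow> real \<Rightarrow> real \<Rightarrow> ((real^3) \<times> real) set" where
  "Bset e lo hi s = {y. cmod (zof y) < 1 \<and> \<bar>fst y $ 3\<bar> < e \<and> lo - s < snd y \<and> snd y < hi - s}"

lemma open_D2: "open D2"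
  unfolding D2_def by (intro open_Collect_conj open_Collect_less continuous_intros)

lemma TC_wf: "U \<subseteq> D2 \<Longrightarrow> wf u \<in> TC U"
proof -
  assume U: "U \<subseteq> D2"
  have "(\<lambda>p. cnj u * phi (fst p) (snd p)) \<in> TC U"
    using U by (intro TC_mult TC_const TC_phi TC_fst TC_snd) (auto simp: D2_def)
  then show ?thesis by (simp add: wf_def[abs_def])
qed

lemma TC_zof: "zof \<in> TC U"
  unfolding zof_def[abs_def] by (intro TC_Complex T_vec_nth)

lemma linear_zof: "linear zof"
  by (rule linearI) (auto simp: zof_def complex_eq_iff)

context
  fixes u :: complex and e lo hi s :: real
  assumes u: "cmod u = 1" and e: "0 < e" "e \<le> lo" and hi: "hi \<le> 1"
begin

lemma cu: "cnj u * u = 1"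
proof -
  have "cnj u * u = complex_of_real ((cmod u)^2)" by (metis complex_norm_square mult.commute of_real_power)
  then show ?thesis using u by simp
qed

lemma cmod_wf: "cmod (wf u p) = cmod (phi (fst p) (snd p))"
  using u by (simp add: wf_def norm_mult)

lemma wof_props:
  assumes "y \<in> Bset e lo hi s"
  shows "cmod (wof s y) = snd y + s" "Re (wof s y) > 0" "Im (wof s y) = fst y $ 3"
proof -
  define r where "r = snd y + s"
  have r: "r > lo" "\<bar>fst y $ 3\<bar> < e" using assms by (auto simp: Bset_def r_def)
  then have rr: "r > \<bar>fst y $ 3\<bar>" "r > 0" using e by auto
  have "\<bar>fst y $ 3\<bar>^2 < r^2" by (rule power_strict_mono) (use rr in auto)
  then have pos: "r^2 - (fst y $ 3)^2 > 0" by simp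
  have "cmod (wof s y) = sqrt ((sqrt (r^2 - (fst y $ 3)^2))^2 + (fst y $ 3)^2)"
    by (simp add: wof_def cmod_def r_def)
  also have "\<dots> = r" using pos rr by simp
  finally show "cmod (wof s y) = snd y + s" by (simp add: r_def)
  show "Re (wof s y) > 0" using pos by (simp add: wof_def r_def)
  show "Im (wof s y) = fst y $ 3" by (simp add: wof_def)
qed

lemma gmap_in: 
  assumes y: "y \<in> Bset e lo hi s"
  shows "gmap u s y \<in> Wset u e lo hi" "hmap u s (gmap u s y) = y"
proof -
  have z: "cmod (zof y) < 1" using y by (simp add: Bset_def)
  have rho: "lo < snd y + s" "snd y + s < hi" using y by (auto simp: Bset_def)
  have w: "cmod (u * wof s y) = snd y + s" using wof_props[OF y] u by (simp add: norm_mult)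
  then have w1: "cmod (u * wof s y) < 1" using rho hi by simp
  have z2: "cmod (phi (zof y) (u * wof s y)) < 1" using phi_in_disc[OF z w1] .
  have inv: "phi (zof y) (phi (zof y) (u * wof s y)) = u * wof s y" using phi_invol[OF z w1] .
  have wfg: "wf u (gmap u s y) = wof s y"
    by (simp add: wf_def gmap_def inv cu mult.assoc[symmetric])
  show "gmap u s y \<in> Wset u e lo hi"
    unfolding Wset_def D2_def using wfg wof_props[OF y] z z2 y rho by (auto simp: gmap_def Bset_def)
  have "fst (hmap u s (gmap u s y)) = fst y"
    unfolding vec_eq_iff forall_3 using wfg wof_props[OF y]
    by (simp add: hmap_def gmap_def zof_def)
  moreover have "snd (hmap u s (gmap u s y)) = snd y"
    by (simp add: hmap_def gmap_def inv w)
  ultimately show "hmap u s (gmap u s y) = y" by (simp add: prod_eq_iff)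
qed

lemma hmap_in:
  assumes x: "x \<in> Wset u e lo hi"
  shows "hmap u s x \<in> Bset e lo hi s" "gmap u s (hmap u s x) = x"
proof -
  obtain z1 z2 where xe: "x = (z1, z2)" by fastforce
  have d: "cmod z1 < 1" "cmod z2 < 1" and w: "0 < Re (wf u x)" "\<bar>Im (wf u x)\<bar> < e"
    "lo < cmod (wf u x)" "cmod (wf u x) < hi" using x by (auto simp: Wset_def D2_def xe)
  have zo: "zof (hmap u s x) = z1" by (simp add: zof_def hmap_def xe)
  show "hmap u s x \<in> Bset e lo hi s"
    using d w cmod_wf[of x] by (simp add: Bset_def zo) (simp add: hmap_def xe)
  have "(cmod (wf u x))^2 - (Im (wf u x))^2 = (Re (wf u x))^2"
    by (simp add: cmod_power2)
  then have "sqrt ((cmod (wf u x))^2 - (Im (wf u x))^2) = Re (wf u x)" using w by simp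
  then have wo: "wof s (hmap u s x) = wf u x"
    using cmod_wf[of x] by (simp add: wof_def hmap_def complex_eq_iff xe)
  have uw: "u * wf u x = phi z1 z2" using cu by (simp add: wf_def xe mult.assoc[symmetric] mult.commute[of u])
  have "gmap u s (hmap u s x) = (z1, phi z1 (u * wf u x))" by (simp add: gmap_def zo wo)
  also have "\<dots> = (z1, z2)" using uw phi_invol d by simp
  finally show "gmap u s (hmap u s x) = x" using xe by simp
qed

lemma W_sub: "Wset u e lo hi \<subseteq> {p \<in> D2. fst p \<noteq> snd p}"
proof
  fix p assume p: "p \<in> Wset u e lo hi"
  then have "wf u p \<noteq> 0" by (auto simp: Wset_def)
  then have "phi (fst p) (snd p) \<noteq> 0" by (simp add: wf_def)
  then show "p \<in> {p \<in> D2. fst p \<noteq> snd p}" using p by (auto simp: Wset_def phi_def)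
qed

lemma open_W: "open (Wset u e lo hi)"
proof -
  have c: "continuous_on D2 (wf u)" using Tv_continuous[OF open_D2 TC_Tv[OF TC_wf[OF order_refl]]] .
  have o: "open {w. 0 < Re w \<and> \<bar>Im w\<bar> < e \<and> lo < cmod w \<and> cmod w < hi}"
    by (intro open_Collect_conj open_Collect_less continuous_intros)
  have "open (wf u -` {w. 0 < Re w \<and> \<bar>Im w\<bar> < e \<and> lo < cmod w \<and> cmod w < hi} \<inter> D2)"
    using c o open_D2 continuous_on_open_vimage by blast
  moreover have "wf u -` {w. 0 < Re w \<and> \<bar>Im w\<bar> < e \<and> lo < cmod w \<and> cmod w < hi} \<inter> D2 = Wset u e lo hi"
    by (auto simp: Wset_def)
  ultimately show ?thesis by simp
qed

lemma open_B: "open (Bset e lo hi s)"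
proof -
  have c: "continuous_on UNIV zof" using Tv_continuous[OF open_UNIV TC_Tv[OF TC_zof]] .
  show ?thesis unfolding Bset_def
    by (intro open_Collect_conj open_Collect_less continuous_intros c continuous_on_norm)
qed

lemma convex_B: "convex (Bset e lo hi s)"
proof -
  have l3: "linear (\<lambda>y::(real^3)\<times>real. fst y $ 3)" by (rule linearI) auto
  have l4: "linear (\<lambda>y::(real^3)\<times>real. snd y)" by (rule linearI) auto
  have "Bset e lo hi s = zof -` ball 0 1 \<inter> (\<lambda>y. fst y $ 3) -` {-e<..<e} \<inter> snd -` {lo - s<..<hi - s}"
    by (auto simp: Bset_def)
  moreover have "convex (zof -` ball 0 1 \<inter> (\<lambda>y. fst y $ 3) -` {-e<..<e} \<inter> snd -` {lo - s<..<hi - s})"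
    by (intro convex_Int convex_linear_vimage linear_zof l3 l4 convex_ball) auto
  ultimately show ?thesis by simp
qed

lemma image_W: "hmap u s ` Wset u e lo hi = Bset e lo hi s"
proof
  show "hmap u s ` Wset u e lo hi \<subseteq> Bset e lo hi s" using hmap_in(1) by auto
  show "Bset e lo hi s \<subseteq> hmap u s ` Wset u e lo hi"
  proof
    fix y assume y: "y \<in> Bset e lo hi s"
    show "y \<in> hmap u s ` Wset u e lo hi"
      by (rule rev_image_eqI[OF gmap_in(1)[OF y]]) (use gmap_in(2)[OF y] in simp)
  qed
qed

lemma inj_W: "inj_on (hmap u s) (Wset u e lo hi)"
  by (rule inj_on_inverseI[of _ "gmap u s"]) (rule hmap_in(2))

lemma Tv_hmap: "hmap u s \<in> Tv (Wset u e lo hi)"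
proof (rule Tv_vec3)
  have sub: "Wset u e lo hi \<subseteq> D2" by (auto simp: Wset_def)
  have b: "\<forall>x\<in>Wset u e lo hi. cmod (fst x) < 1 \<and> cmod (snd x) < 1" using sub by (auto simp: D2_def)
  show "(\<lambda>x. fst (hmap u s x) $ i) \<in> Tf (Wset u e lo hi)" for i
  proof -
    consider "i = 1" | "i = 2" | "i = 3" using exhaust_3 by blast
    then show ?thesis
    proof cases
      case 1 then show ?thesis using TC_Re[OF TC_fst] by (simp add: hmap_def)
    next
      case 2 then show ?thesis using TC_Im[OF TC_fst] by (simp add: hmap_def)
    next
      case 3 then show ?thesis using TC_Im[OF TC_wf[OF sub]] by (simp add: hmap_def)
    qed
  qed
  have nz: "\<forall>x\<in>Wset u e lo hi. phi (fst x) (snd x) \<noteq> 0"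
    by (auto simp: Wset_def wf_def)
  have "(\<lambda>x. cmod (phi (fst x) (snd x)) - s) \<in> Tf (Wset u e lo hi)"
    by (intro T_diff T_cmod TC_phi TC_fst TC_snd Tf.T_const b nz)
  then show "(\<lambda>x. snd (hmap u s x)) \<in> Tf (Wset u e lo hi)" by (simp add: hmap_def)
qed

lemma wof_pos: "y \<in> Bset e lo hi s \<Longrightarrow> (snd y + s) * (snd y + s) - fst y $ 3 * fst y $ 3 > 0"
proof -
  assume y: "y \<in> Bset e lo hi s"
  have r: "snd y + s > lo" "\<bar>fst y $ 3\<bar> < e" using y by (auto simp: Bset_def)
  then have rr: "snd y + s > \<bar>fst y $ 3\<bar>" using e by auto
  have "\<bar>fst y $ 3\<bar> * \<bar>fst y $ 3\<bar> < (snd y + s) * (snd y + s)"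
    by (rule mult_strict_mono) (use rr in auto)
  then show ?thesis by (simp add: abs_mult_self_eq)
qed

lemma Tv_gmap: "gmap u s \<in> Tv (Bset e lo hi s)"
proof (rule Tv_prod_complex)
  let ?B = "Bset e lo hi s"
  show "(\<lambda>x. fst (gmap u s x)) \<in> TC ?B" using TC_zof by (simp add: gmap_def)
  have "(\<lambda>y. Complex (sqrt ((snd y + s) * (snd y + s) - fst y $ 3 * fst y $ 3)) (fst y $ 3)) \<in> TC ?B"
    using wof_pos by (intro TC_Complex T_sqrt T_diff Tf.T_mult Tf.T_add T_snd_real Tf.T_const T_vec_nth) auto
  then have wo: "wof s \<in> TC ?B" by (rule TC_cong) (auto simp: wof_def power2_eq_square)
  have b: "\<forall>y\<in>?B. cmod (zof y) < 1 \<and> cmod (u * wof s y) < 1"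
  proof
    fix y assume y: "y \<in> ?B"
    then show "cmod (zof y) < 1 \<and> cmod (u * wof s y) < 1"
      using wof_props(1)[OF y] u hi by (auto simp: Bset_def norm_mult)
  qed
  have "(\<lambda>y. phi (zof y) (u * wof s y)) \<in> TC ?B"
    by (intro TC_phi TC_zof TC_mult TC_const wo b)
  then show "(\<lambda>x. snd (gmap u s x)) \<in> TC ?B" by (simp add: gmap_def)
qed

lemma diffeo_W: "diffeo_on (Wset u e lo hi) (hmap u s)"
  unfolding diffeo_on_def
proof (intro conjI)
  show "open (Wset u e lo hi)" by (rule open_W)
  show "inj_on (hmap u s) (Wset u e lo hi)" by (rule inj_W)
  show "open (hmap u s ` Wset u e lo hi)" unfolding image_W by (rule open_B)
  show "smooth_on (Wset u e lo hi) (hmap u s)" by (rule Tv_smooth[OF open_W Tv_hmap])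
  have "inv_into (Wset u e lo hi) (hmap u s) \<in> Tv (Bset e lo hi s)"
    by (rule Tv_cong[OF Tv_gmap]) (auto intro!: inv_into_f_eq inj_W gmap_in)
  then show "smooth_on (hmap u s ` Wset u e lo hi) (inv_into (Wset u e lo hi) (hmap u s))"
    unfolding image_W by (rule Tv_smooth[OF open_B])
qed

end




lemma chart_exists:
  assumes p: "p \<in> D2" "fst p \<noteq> snd p"
  shows "\<exists>W (h :: complex \<times> complex \<Rightarrow> (real^3) \<times> real) g. p \<in> W \<and> W \<subseteq> {q\<in>D2. fst q \<noteq> snd q}
     \<and> diffeo_on W h \<and> convex (h ` W) \<and> open (h ` W)
     \<and> (\<forall>q\<in>W. snd (h q) = cmod (phi (fst q) (snd q)) - s) \<and> h \<in> Tv W \<and> g \<in> Tv (h ` W)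
     \<and> (\<forall>y\<in>h ` W. g y \<in> W \<and> h (g y) = y) \<and> (\<forall>q\<in>W. g (h q) = q)"
proof -
  define w0 where "w0 = phi (fst p) (snd p)"
  define a0 where "a0 = cmod w0"
  have d: "cmod (fst p) < 1" "cmod (snd p) < 1" using p by (auto simp: D2_def)
  have a0: "0 < a0" "a0 < 1" using p d phi_in_disc[OF d] phi_eq_0_iff[OF d]
    by (auto simp: a0_def w0_def)
  define u where "u = w0 / complex_of_real a0"
  have u: "cmod u = 1" using a0 by (simp add: u_def norm_divide a0_def)
  have e: "0 < a0/2" "a0/2 \<le> a0/2" and hi: "(1+a0)/2 \<le> 1" using a0 by auto
  note L = image_W[OF u e hi, of s] diffeo_W[OF u e hi, of s] convex_B[OF u e hi, of s]
    open_B[OF u e hi, of s] W_sub[OF u e hi] Tv_hmap[OF u e hi, of s] Tv_gmap[OF u e hi, of s]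
    gmap_in[OF u e hi, of _ s] hmap_in[OF u e hi, of _ s]
  have "cnj w0 * w0 = complex_of_real (a0^2)"
    by (metis a0_def complex_norm_square mult.commute of_real_power)
  then have wp: "wf u p = complex_of_real a0"
    using a0 by (simp add: wf_def u_def w0_def[symmetric] power2_eq_square)
  have pW: "p \<in> Wset u (a0/2) (a0/2) ((1+a0)/2)"
    using p a0 wp by (auto simp: Wset_def)
  show ?thesis
    apply (rule exI[of _ "Wset u (a0/2) (a0/2) ((1+a0)/2)"])
    apply (rule exI[of _ "hmap u s"])
    apply (rule exI[of _ "gmap u s"])
    using L pW by (auto simp: hmap_def)
qed




lemma connected_leaf:
  assumes a: "0 < a" "a < 1"
  shows "connected {p \<in> D2. cmod (phi (fst p) (snd p)) = a}"
proof -
  define Psi where "Psi q = (fst q, phi (fst q) (snd q))" for q :: "complex \<times> complex"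
  have T: "Psi \<in> Tv D2"
    unfolding Psi_def by (rule Tv_prod_complex) (auto intro!: TC_phi TC_fst TC_snd simp: D2_def)
  have c: "continuous_on D2 Psi" by (rule Tv_continuous[OF open_D2 T])
  have sub: "ball 0 1 \<times> sphere 0 a \<subseteq> D2" using a by (auto simp: D2_def)
  have eq: "{p \<in> D2. cmod (phi (fst p) (snd p)) = a} = Psi ` (ball 0 1 \<times> sphere 0 a)"
  proof
    show "{p \<in> D2. cmod (phi (fst p) (snd p)) = a} \<subseteq> Psi ` (ball 0 1 \<times> sphere 0 a)"
    proof
      fix p assume p: "p \<in> {p \<in> D2. cmod (phi (fst p) (snd p)) = a}"
      then have d: "cmod (fst p) < 1" "cmod (snd p) < 1" by (auto simp: D2_def)
      have "Psi (fst p, phi (fst p) (snd p)) = p" using phi_invol[OF d] by (simp add: Psi_def)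
      moreover have "(fst p, phi (fst p) (snd p)) \<in> ball 0 1 \<times> sphere 0 a" using p d by auto
      ultimately show "p \<in> Psi ` (ball 0 1 \<times> sphere 0 a)" by (metis image_eqI)
    qed
    show "Psi ` (ball 0 1 \<times> sphere 0 a) \<subseteq> {p \<in> D2. cmod (phi (fst p) (snd p)) = a}"
    proof
      fix q assume "q \<in> Psi ` (ball 0 1 \<times> sphere 0 a)"
      then obtain z w where q: "q = Psi (z, w)" "cmod z < 1" "cmod w = a" by auto
      then have w: "cmod w < 1" using a by simp
      show "q \<in> {p \<in> D2. cmod (phi (fst p) (snd p)) = a}"
        using q w phi_in_disc[OF q(2) w] phi_invol[OF q(2) w] by (auto simp: Psi_def D2_def)
    qed
  qed
  have "connected (ball (0::complex) 1 \<times> sphere (0::complex) a)"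
  proof (rule connected_Times)
    show "connected (ball (0::complex) 1)" by simp
    show "connected (sphere (0::complex) a)" using connected_sphere[of "0::complex" a] by simp
  qed
  then show ?thesis unfolding eq by (rule connected_continuous_image[OF continuous_on_subset[OF c sub]])
qed

theorem lemma2p5:
  fixes f :: "complex \<times> complex \<Rightarrow> real"
    and Diag U :: "(complex \<times> complex) set"
    and F :: "real \<Rightarrow> (complex \<times> complex) set"
  defines "f \<equiv> (\<lambda>(z1, z2). cmod (phi z1 z2))"
    and "Diag \<equiv> {(z, z) | z. z \<in> unit_disc}"
    and "U \<equiv> unit_disc \<times> unit_disc - Diag"
    and "F \<equiv> (\<lambda>a. {p \<in> unit_disc \<times> unit_disc. f p = a})"
  shows "f ` (unit_disc \<times> unit_disc) \<subseteq> {0..<1}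
    \<and> f ` U \<subseteq> {0<..<1} \<and> submersion_on U f
    \<and> foliation U (F ` {0<..<1}) TYPE(real^3) TYPE(real)
    \<and> (\<forall>a\<in>{0<..<1}. embedded_submanifold (F a) TYPE(real^3) TYPE(real))
    \<and> (\<forall>a\<in>{0<..<1}. invariant_under {1, -1} swap_act (F a)
           \<and> free_action {1, -1} 1 swap_act (F a)
           \<and> properly_discontinuous_action {1, -1} 1 swap_act (F a))"
proof -
  have fv: "f p = cmod (phi (fst p) (snd p))" for p by (simp add: f_def case_prod_unfold)
  have DD: "unit_disc \<times> unit_disc = D2" by (auto simp: D2_def unit_disc_def)
  have Ueq: "U = {p \<in> D2. fst p \<noteq> snd p}" by (auto simp: U_def Diag_def DD[symmetric])
  have Fv: "F a = {p \<in> D2. f p = a}" for a by (simp add: F_def DD)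
  have oU: "open U"
  proof -
    have e: "U = D2 \<inter> {p. fst p \<noteq> snd p}" by (auto simp: Ueq)
    have "open {p::complex\<times>complex. fst p \<noteq> snd p}"
      by (rule open_Collect_neq) (rule continuous_on_fst continuous_on_snd continuous_on_id)+
    then show ?thesis unfolding e by (intro open_Int open_D2)
  qed
  have P1: "f ` (unit_disc \<times> unit_disc) \<subseteq> {0..<1}"
    using phi_in_disc by (auto simp: DD D2_def fv)
  have fU: "f p \<in> {0<..<1}" if "p \<in> U" for p
    using that phi_in_disc phi_eq_0_iff by (auto simp: Ueq D2_def fv)
  have P2: "f ` U \<subseteq> {0<..<1}" using fU by auto
  have FU: "F a \<subseteq> U" if "0 < a" for a
    using that phi_eq_0_iff by (auto simp: Fv Ueq D2_def fv)
  have P3: "submersion_on U f"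
    unfolding submersion_on_def
  proof
    have "f \<in> Tf U"
    proof -
      have "(\<lambda>p. cmod (phi (fst p) (snd p))) \<in> Tf U"
        by (intro T_cmod TC_phi TC_fst TC_snd) (use phi_eq_0_iff in \<open>auto simp: Ueq D2_def\<close>)
      then show ?thesis by (simp add: fv[abs_def])
    qed
    then show "smooth_on U f" using Tv_smooth[OF oU Tf_Tv] by blast
    show "\<forall>x\<in>U. surj (frechet_derivative f (at x))"
    proof
      fix p assume pU: "p \<in> U"
      obtain W and h :: "complex \<times> complex \<Rightarrow> (real^3) \<times> real" and g where
        ch: "p \<in> W" "W \<subseteq> {q\<in>D2. fst q \<noteq> snd q}" "diffeo_on W h" "open (h ` W)"
        "\<forall>q\<in>W. snd (h q) = cmod (phi (fst q) (snd q)) - 0" "h \<in> Tv W" "g \<in> Tv (h ` W)"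
        "\<forall>y\<in>h ` W. g y \<in> W \<and> h (g y) = y" "\<forall>q\<in>W. g (h q) = q"
        using chart_exists[of p 0] pU by (auto simp: Ueq)
      have oW: "open W" using ch(3) by (simp add: diffeo_on_def)
      obtain Dh where Dh: "\<forall>x\<in>W. (h has_derivative Dh x) (at x)" using Tv_deriv[OF oW ch(6)] by blast
      obtain Dg where Dg: "\<forall>y\<in>h ` W. (g has_derivative Dg y) (at y)" using Tv_deriv[OF ch(4) ch(7)] by blast
      have hp: "h p \<in> h ` W" using ch(1) by simp
      have gp: "g (h p) = p" using ch(9) ch(1) by simp
      have "((h \<circ> g) has_derivative (Dh p \<circ> Dg (h p))) (at (h p))"
        using diff_chain_at[OF Dg[rule_format, OF hp], of h "Dh p"] Dh ch(1) gp by simp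
      moreover have "((h \<circ> g) has_derivative (\<lambda>y. y)) (at (h p))"
        by (rule has_derivative_transform_within_open[OF has_derivative_ident ch(4) hp]) (use ch(8) in auto)
      ultimately have id: "Dh p \<circ> Dg (h p) = (\<lambda>y. y)" by (rule has_derivative_unique)
      have "((\<lambda>q. snd (h q)) has_derivative (\<lambda>v. snd (Dh p v))) (at p)"
        using has_derivative_snd[OF Dh[rule_format, OF ch(1)]] .
      then have "(f has_derivative (\<lambda>v. snd (Dh p v))) (at p)"
        by (rule has_derivative_transform_within_open[OF _ oW ch(1)]) (use ch(5) fv in auto)
      then have fd: "frechet_derivative f (at p) = (\<lambda>v. snd (Dh p v))" by (simp add: frechet_derivative_at[symmetric])
      show "surj (frechet_derivative f (at p))"
        unfolding fd surj_def
      proof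
        fix r :: real
        have "snd (Dh p (Dg (h p) (0, r))) = r" using id by (metis comp_apply snd_conv)
        then show "\<exists>v. r = snd (Dh p v)" by metis
      qed
    qed
  qed
  have P4: "foliation U (F ` {0<..<1}) TYPE(real^3) TYPE(real)"
    unfolding foliation_def
  proof (intro conjI)
    show "open U" by (rule oU)
    show "\<Union> (F ` {0<..<1}) = U"
    proof
      show "\<Union> (F ` {0<..<1}) \<subseteq> U" using FU by (force simp: subset_iff)
      show "U \<subseteq> \<Union> (F ` {0<..<1})"
      proof
        fix p assume "p \<in> U"
        then have "p \<in> F (f p)" "f p \<in> {0<..<1}" using fU by (auto simp: Fv Ueq)
        then show "p \<in> \<Union> (F ` {0<..<1})" by blast
      qed
    qed
    show "\<forall>A\<in>F ` {0<..<1}. A \<noteq> {} \<and> connected A"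
    proof
      fix A assume "A \<in> F ` {0<..<1}"
      then obtain a where a: "0 < a" "a < 1" "A = F a" by auto
      have "(0, complex_of_real a) \<in> A" using a by (simp add: Fv fv D2_def phi_def)
      moreover have "connected A" using connected_leaf[OF a(1,2)] a(3) by (simp add: Fv fv)
      ultimately show "A \<noteq> {} \<and> connected A" by auto
    qed
    show "\<forall>A\<in>F ` {0<..<1}. \<forall>B\<in>F ` {0<..<1}. A \<noteq> B \<longrightarrow> A \<inter> B = {}"
    proof (intro ballI impI)
      fix A B assume A: "A \<in> F ` {0<..<1}" and B: "B \<in> F ` {0<..<1}" and ne: "A \<noteq> B"
      obtain a b where ab: "A = F a" "B = F b" using A B by auto
      show "A \<inter> B = {}"
      proof (rule ccontr)
        assume "A \<inter> B \<noteq> {}"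
        then obtain x where "x \<in> F a" "x \<in> F b" using ab by auto
        then have "a = b" by (simp add: Fv)
        then show False using ne ab by simp
      qed
    qed
    show "\<forall>p\<in>U. \<exists>W (h::complex \<times> complex \<Rightarrow> (real^3) \<times> real). p \<in> W \<and> W \<subseteq> U \<and> diffeo_on W h \<and> convex (h ` W)
          \<and> (\<forall>A\<in>F ` {0<..<1}. \<forall>C\<in>components (A \<inter> W). \<exists>c. h ` C = {y \<in> h ` W. snd y = c})"
    proof
      fix p assume pU: "p \<in> U"
      obtain W and h :: "complex \<times> complex \<Rightarrow> (real^3) \<times> real" and g where
        ch: "p \<in> W" "W \<subseteq> {q\<in>D2. fst q \<noteq> snd q}" "diffeo_on W h" "convex (h ` W)" "open (h ` W)"
        "\<forall>q\<in>W. snd (h q) = cmod (phi (fst q) (snd q)) - 0" "h \<in> Tv W" "g \<in> Tv (h ` W)"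
        "\<forall>y\<in>h ` W. g y \<in> W \<and> h (g y) = y" "\<forall>q\<in>W. g (h q) = q"
        using chart_exists[of p 0] pU by (auto simp: Ueq)
      have comp: "\<exists>c. h ` C = {y \<in> h ` W. snd y = c}" if A: "A \<in> F ` {0<..<1}" and C: "C \<in> components (A \<inter> W)" for A C
      proof -
        obtain a where a: "A = F a" using A by auto
        define S where "S = {y \<in> h ` W. snd y = a}"
        have AW: "A \<inter> W = g ` S"
        proof
          show "A \<inter> W \<subseteq> g ` S"
          proof
            fix x assume x: "x \<in> A \<inter> W"
            then have "h x \<in> S" using ch(6) by (auto simp: S_def a Fv fv)
            moreover have "g (h x) = x" using ch(10) x by auto
            ultimately show "x \<in> g ` S" by (metis image_eqI)
          qed
          show "g ` S \<subseteq> A \<inter> W"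
          proof
            fix x assume "x \<in> g ` S"
            then obtain y where y: "y \<in> S" "x = g y" by auto
            then have yW: "y \<in> h ` W" by (simp add: S_def)
            have xW: "x \<in> W" using ch(9) yW y by auto
            have "f x = snd (h x)" using ch(6) xW fv by simp
            also have "\<dots> = a"
            proof -
              have "h (g y) = y" using ch(9) yW by blast
              then show ?thesis using y by (simp add: S_def)
            qed
            finally show "x \<in> A \<inter> W" using xW ch(2) by (auto simp: a Fv)
          qed
        qed
        have cS: "convex S"
        proof -
          have "linear (snd :: (real^3) \<times> real \<Rightarrow> real)" by (rule linearI) auto
          then have "convex (snd -` {a} :: ((real^3) \<times> real) set)" by (rule convex_linear_vimage) simp
          then have "convex (h ` W \<inter> snd -` {a})" using ch(4) by (rule convex_Int[rotated])
          moreover have "h ` W \<inter> snd -` {a} = S" by (auto simp: S_def)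
          ultimately show ?thesis by simp
        qed
        have gc: "continuous_on S g"
          using continuous_on_subset[OF Tv_continuous[OF ch(5) ch(8)]] by (auto simp: S_def)
        have "connected (A \<inter> W)" unfolding AW
          by (rule connected_continuous_image[OF gc convex_connected[OF cS]])
        moreover have "A \<inter> W \<noteq> {}" using C by (metis components_empty empty_iff)
        ultimately have "components (A \<inter> W) = {A \<inter> W}" by (simp add: components_eq_sing_iff)
        then have "C = g ` S" using C AW by simp
        have hg: "\<And>y. y \<in> S \<Longrightarrow> h (g y) = y" using ch(9) by (auto simp: S_def)
        have "h ` C = (\<lambda>y. h (g y)) ` S" using \<open>C = g ` S\<close> by (simp add: image_image)
        also have "\<dots> = S" using hg by (metis (no_types, lifting) image_cong image_ident)
        finally have "h ` C = S" .
        then show ?thesis unfolding S_def by (rule exI[of _ a])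
      qed
      show "\<exists>W (h::complex \<times> complex \<Rightarrow> (real^3) \<times> real). p \<in> W \<and> W \<subseteq> U \<and> diffeo_on W h \<and> convex (h ` W)
          \<and> (\<forall>A\<in>F ` {0<..<1}. \<forall>C\<in>components (A \<inter> W). \<exists>c. h ` C = {y \<in> h ` W. snd y = c})"
      proof -
        have "W \<subseteq> U" using ch(2) by (auto simp: Ueq)
        then show ?thesis by (intro exI[of _ W] exI[of _ h] conjI ballI comp ch(1) ch(3) ch(4))
      qed
    qed
  qed
  have P5: "\<forall>a\<in>{0<..<1}. embedded_submanifold (F a) TYPE(real^3) TYPE(real)"
    unfolding embedded_submanifold_def
  proof (intro ballI)
    fix a p assume a: "a \<in> {0<..<1::real}" and p: "p \<in> F a"
    then have pU: "p \<in> U" using FU by auto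
    obtain W and h :: "complex \<times> complex \<Rightarrow> (real^3) \<times> real" and g where
      ch: "p \<in> W" "W \<subseteq> {q\<in>D2. fst q \<noteq> snd q}" "diffeo_on W h"
      "\<forall>q\<in>W. snd (h q) = cmod (phi (fst q) (snd q)) - a"
      "\<forall>y\<in>h ` W. g y \<in> W \<and> h (g y) = y"
      using chart_exists[of p a] pU by (auto simp: Ueq)
    have "h ` (F a \<inter> W) = {y \<in> h ` W. snd y = 0}"
    proof
      show "h ` (F a \<inter> W) \<subseteq> {y \<in> h ` W. snd y = 0}" using ch(4) by (auto simp: Fv fv)
      show "{y \<in> h ` W. snd y = 0} \<subseteq> h ` (F a \<inter> W)"
      proof
        fix y assume y: "y \<in> {y \<in> h ` W. snd y = 0}"
        then have gy: "g y \<in> W" "h (g y) = y" using ch(5) by auto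
        then have "snd (h (g y)) = cmod (phi (fst (g y)) (snd (g y))) - a" using ch(4) by blast
        then have "f (g y) = a" using gy y fv by simp
        then have "g y \<in> F a \<inter> W" using gy ch(2) by (auto simp: Fv)
        then show "y \<in> h ` (F a \<inter> W)" using gy by (metis image_eqI)
      qed
    qed
    then show "\<exists>W (h::complex \<times> complex \<Rightarrow> (real^3) \<times> real). p \<in> W \<and> diffeo_on W h \<and> h ` (F a \<inter> W) = {y \<in> h ` W. snd y = 0}"
      using ch by blast
  qed
  have P6: "\<forall>a\<in>{0<..<1}. invariant_under {1, -1} swap_act (F a)
           \<and> free_action {1, -1} 1 swap_act (F a)
           \<and> properly_discontinuous_action {1, -1} 1 swap_act (F a)"
  proof
    fix a :: real assume a: "a \<in> {0<..<1}"
    have sw: "swap_act (-1) p = (snd p, fst p)" for p by (simp add: swap_act_def)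
    have inv: "invariant_under {1, -1} swap_act (F a)"
      unfolding invariant_under_def
    proof (intro ballI subsetI)
      fix g :: int and z assume g: "g \<in> {1, -1}" and z: "z \<in> swap_act g ` F a"
      then obtain p where p: "p \<in> F a" "z = swap_act g p" by blast
      show "z \<in> F a"
      proof (cases "g = 1")
        case True then show ?thesis using p by (simp add: swap_act_def)
      next
        case False
        then have "z = (snd p, fst p)" using p by (simp add: swap_act_def)
        moreover have "(snd p, fst p) \<in> F a"
          using p(1) cmod_phi_swap[of "snd p" "fst p"] by (simp add: Fv fv D2_def)
        ultimately show ?thesis by simp
      qed
    qed
    have fr: "free_action {1, -1} 1 swap_act (F a)"
      unfolding free_action_def
    proof (intro ballI impI)
      fix g :: int and x assume g: "g \<in> {1, -1}" and x: "x \<in> F a" and e: "swap_act g x = x"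
      show "g = 1"
      proof (rule ccontr)
        assume "g \<noteq> 1"
        then have "g = -1" using g by auto
        then have "(snd x, fst x) = x" using e by (simp add: swap_act_def)
        then have "fst x = snd x" by (metis fst_conv snd_conv)
        then have "f x = 0" by (simp add: fv phi_def)
        moreover have "f x = a" using x by (simp add: Fv)
        ultimately show False using a by simp
      qed
    qed
    have pd: "properly_discontinuous_action {1, -1} 1 swap_act (F a)"
      unfolding properly_discontinuous_action_def
    proof
      fix x assume x: "x \<in> F a"
      then have xU: "x \<in> U" using FU a by auto
      define r where "r = cmod (fst x - snd x) / 2"
      have r: "r > 0" using xU by (auto simp: r_def Ueq)
      have disj: "swap_act g ` (F a \<inter> ball x r) \<inter> (F a \<inter> ball x r) = {}" if "g \<in> {1, -1}" "g \<noteq> 1" for g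
      proof -
        have g: "g = -1" using that by auto
        have False if y: "y \<in> ball x r" "(snd y, fst y) \<in> ball x r" for y
        proof -
          have 1: "dist (fst x) (fst y) < r" using y(1) dist_fst_le[of x y] by (simp add: dist_commute)
          have 2: "dist (snd x) (snd y) < r" using y(1) dist_snd_le[of x y] by (simp add: dist_commute)
          have 3: "dist (fst x) (snd y) < r" using y(2) dist_fst_le[of x "(snd y, fst y)"] by (simp add: dist_commute)
          have "dist (fst x) (snd x) \<le> dist (fst x) (snd y) + dist (snd x) (snd y)"
            using dist_triangle[of "fst x" "snd x" "snd y"] by (simp add: dist_commute)
          then have "cmod (fst x - snd x) < 2 * r" using 2 3 by (simp add: dist_norm)
          then show False by (simp add: r_def)
        qed
        show ?thesis
        proof (rule equals0I)
          fix z assume z: "z \<in> swap_act g ` (F a \<inter> ball x r) \<inter> (F a \<inter> ball x r)"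
          then obtain y where y: "y \<in> F a \<inter> ball x r" "z = swap_act g y" by blast
          then have "z = (snd y, fst y)" using g by (simp add: swap_act_def)
          then show False using z y \<open>\<And>y. y \<in> ball x r \<Longrightarrow> (snd y, fst y) \<in> ball x r \<Longrightarrow> False\<close> by blast
        qed
      qed
      show "\<exists>V. openin (top_of_set (F a)) V \<and> x \<in> V \<and> (\<forall>g\<in>{1, -1}. g \<noteq> 1 \<longrightarrow> swap_act g ` V \<inter> V = {})"
        by (intro exI[of _ "F a \<inter> ball x r"] conjI ballI impI openin_open_Int open_ball disj IntI x centre_in_ball[THEN iffD2, OF r])
    qed
    show "invariant_under {1, -1} swap_act (F a) \<and> free_action {1, -1} 1 swap_act (F a)
           \<and> properly_discontinuous_action {1, -1} 1 swap_act (F a)" using inv fr pd by blast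
  qed
  show ?thesis using P1 P2 P3 P4 P5 P6 by blast
qed


end
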